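(* Let $\epsilon_1<\epsilon_2$ with $[\epsilon_1,\epsilon_2]\subseteq\operatorname{int}(\mathcal{E})$. If the primal optimal set $\mathcal{P}^*(\epsilon)$ is the same set for all $\epsilon\in[\epsilon_1,\epsilon_2]$ and $\operatorname{rank}(S^*(\epsilon))$ is constant on $[\epsilon_1,\epsilon_2]$ (where $(X^*(\epsilon),y^*(\epsilon),S^*(\epsilon))$ is a maximally complementary optimal solution), then the optimal partition $\pi(\epsilon)$ is constant on $[\epsilon_1,\epsilon_2]$.
   Context: Let $\mathbb{S}^n$ be the real symmetric $n\times n$ matrices, $\langle C,X\rangle=\operatorname{trace}(CX)$, $\succeq0$ positive semidefinite, $\succ0$ positive definite. Fix $C,\bar C,A^1,\dots,A^m\in\mathbb{S}^n$, $b\in\mathbb{R}^m$; $(P_\epsilon)$: $\inf\{\langle C+\epsilon\bar C,X\rangle:\langle A^i,X\rangle=b_i,\ X\succeq0\}$; $(D_\epsilon)$: $\sup\{b^Ty:\sum_iy_iA^i+S=C+\epsilon\bar C,\ S\succeq0\}$; $v(\epsilon)$ the optimal value of $(P_\epsilon)$, $\mathcal{E}=\{\epsilon:v(\epsilon)>-\infty\}$. Standing assumptions: the $A^i$ are linearly independent and there exist $X\succ0$ feasible for $(P_0)$ and $(y,S)$ with $S\succ0$ feasible for $(D_0)$; then for every $\epsilon\in\operatorname{int}(\mathcal{E})$ strong duality holds and the optimal sets $\mathcal{P}^*(\epsilon)$ (of $(P_\epsilon)$) and $\mathcal{D}^*(\epsilon)$ (of $(D_\epsilon)$) are nonempty and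 compact. An optimal solution $(X^*(\epsilon),y^*(\epsilon),S^*(\epsilon))$ is maximally complementary if $X^*(\epsilon)\in\operatorname{ri}\mathcal{P}^*(\epsilon)$ and $(y^*(\epsilon),S^*(\epsilon))\in\operatorname{ri}\mathcal{D}^*(\epsilon)$ ($\operatorname{ri}$ = relative interior); such solutions exist for $\epsilon\in\operatorname{int}(\mathcal{E})$ and their ranks are maximal over the optimal set. The optimal partition is $\pi(\epsilon)=(\mathcal{B}(\epsilon),\mathcal{T}(\epsilon),\mathcal{N}(\epsilon))$ with $\mathcal{B}(\epsilon)=\mathcal{R}(X^*(\epsilon))$, $\mathcal{N}(\epsilon)=\mathcal{R}(S^*(\epsilon))$ (column spaces), $\mathcal{T}(\epsilon)=(\mathcal{B}(\epsilon)+\mathcal{N}(\epsilon))^\perp$; it does not depend on the choice of maximally complementary solution. *)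

theory Defs
  imports "HOL-Analysis.Analysis"
begin

definition sym_mat :: "real^'n^'n \<Rightarrow> bool" where
  "sym_mat X \<longleftrightarrow> transpose X = X"

definition psd :: "real^'n^'n \<Rightarrow> bool" where
  "psd X \<longleftrightarrow> sym_mat X \<and> (\<forall>x. 0 \<le> x \<bullet> (X *v x))"

definition pd :: "real^'n^'n \<Rightarrow> bool" where
  "pd X \<longleftrightarrow> sym_mat X \<and> (\<forall>x. x \<noteq> 0 \<longrightarrow> 0 < x \<bullet> (X *v x))"

definition trip :: "real^'n^'n \<Rightarrow> real^'n^'n \<Rightarrow> real" where
  "trip C X = trace (C ** X)"

definition primal_feas :: "('m::finite \<Rightarrow> real^'n^'n) \<Rightarrow> real^'m \<Rightarrow> real^'n^'n \<Rightarrow> bool" where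
  "primal_feas A b X \<longleftrightarrow> psd X \<and> (\<forall>i. trip (A i) X = b $ i)"

definition dual_feas :: "real^'n^'n \<Rightarrow> real^'n^'n \<Rightarrow> ('m::finite \<Rightarrow> real^'n^'n) \<Rightarrow> real
     \<Rightarrow> (real^'m) \<times> (real^'n^'n) \<Rightarrow> bool" where
  "dual_feas C Cb A eps yS \<longleftrightarrow>
     (\<Sum>i\<in>UNIV. (fst yS $ i) *\<^sub>R A i) + snd yS = C + eps *\<^sub>R Cb \<and> psd (snd yS)"

text \<open>The set E of parameters with finite optimal value v(eps) > -infinity
  (the primal feasible set is nonempty under the standing assumptions,
  so this means the objective is bounded below on the feasible set).\<close>
definition Eset :: "real^'n^'n \<Rightarrow> real^'n^'n \<Rightarrow> ('m::finite \<Rightarrow> real^'n^'n) \<Rightarrow> real^'m \<Rightarrow> real set" where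
  "Eset C Cb A b = {eps. \<exists>l. \<forall>X. primal_feas A b X \<longrightarrow> l \<le> trip (C + eps *\<^sub>R Cb) X}"

definition Popt :: "real^'n^'n \<Rightarrow> real^'n^'n \<Rightarrow> ('m::finite \<Rightarrow> real^'n^'n) \<Rightarrow> real^'m \<Rightarrow> real
     \<Rightarrow> (real^'n^'n) set" where
  "Popt C Cb A b eps = {X. primal_feas A b X \<and>
     (\<forall>X'. primal_feas A b X' \<longrightarrow> trip (C + eps *\<^sub>R Cb) X \<le> trip (C + eps *\<^sub>R Cb) X')}"

definition Dopt :: "real^'n^'n \<Rightarrow> real^'n^'n \<Rightarrow> ('m::finite \<Rightarrow> real^'n^'n) \<Rightarrow> real^'m \<Rightarrow> real
     \<Rightarrow> ((real^'m) \<times> (real^'n^'n)) set" where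
  "Dopt C Cb A b eps = {yS. dual_feas C Cb A eps yS \<and>
     (\<forall>yS'. dual_feas C Cb A eps yS' \<longrightarrow> b \<bullet> fst yS' \<le> b \<bullet> fst yS)}"

definition max_compl :: "real^'n^'n \<Rightarrow> real^'n^'n \<Rightarrow> ('m::finite \<Rightarrow> real^'n^'n) \<Rightarrow> real^'m \<Rightarrow> real
     \<Rightarrow> real^'n^'n \<Rightarrow> real^'m \<Rightarrow> real^'n^'n \<Rightarrow> bool" where
  "max_compl C Cb A b eps X y S \<longleftrightarrow>
     X \<in> rel_interior (Popt C Cb A b eps) \<and> (y, S) \<in> rel_interior (Dopt C Cb A b eps)"

definition opt_partition :: "real^'n^'n \<Rightarrow> real^'n^'n
     \<Rightarrow> (real^'n) set \<times> (real^'n) set \<times> (real^'n) set" where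
  "opt_partition X S =
     (range (\<lambda>x. X *v x),
      orthogonal_comp {u + w | u w. u \<in> range (\<lambda>x. X *v x) \<and> w \<in> range (\<lambda>x. S *v x)},
      range (\<lambda>x. S *v x))"

end

theory Submission
  imports Defs
begin


lemma inner_mv_sum: "(x::real^'n) \<bullet> (M *v y) = (\<Sum>i\<in>UNIV. \<Sum>j\<in>UNIV. x$i * M$i$j * y$j)"
  by (simp add: inner_vec_def matrix_vector_mult_def sum_distrib_left mult.assoc)

lemma sym_entry: "sym_mat M \<Longrightarrow> M$i$j = M$j$i"
  unfolding sym_mat_def by (metis transpose_def vec_lambda_beta)

lemma sym_inner: "sym_mat (M::real^'n^'n) \<Longrightarrow> x \<bullet> (M *v y) = (M *v x) \<bullet> y"
proof -
  assume s: "sym_mat M"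
  have "(M *v x) \<bullet> y = y \<bullet> (M *v x)" by (simp add: inner_commute)
  also have "\<dots> = (\<Sum>i\<in>UNIV. \<Sum>j\<in>UNIV. y$i * M$i$j * x$j)" by (rule inner_mv_sum)
  also have "\<dots> = (\<Sum>j\<in>UNIV. \<Sum>i\<in>UNIV. y$i * M$i$j * x$j)" by (rule sum.swap)
  also have "\<dots> = (\<Sum>j\<in>UNIV. \<Sum>i\<in>UNIV. x$j * M$j$i * y$i)"
    using sym_entry[OF s] by (simp add: mult.commute mult.left_commute)
  finally show ?thesis by (simp add: inner_mv_sum)
qed


lemma quad_cs:
  fixes A B C :: real
  assumes h: "\<forall>t. 0 \<le> A + 2*t*B + t^2*C" and C0: "0 \<le> C"
  shows "B^2 \<le> A*C"
proof (cases "C = 0")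
  case False
  hence Cp: "C > 0" using C0 by simp
  define t where "t = -B/C"
  have tC: "t*C = -B" using Cp by (simp add: t_def)
  have "0 \<le> C * (A + 2*t*B + t^2*C)" using h Cp by simp
  also have "C * (A + 2*t*B + t^2*C) = A*C + 2*(t*C)*B + (t*C)^2"
    by (simp add: algebra_simps power2_eq_square)
  also have "\<dots> = A*C - B^2" using tC by (simp add: power2_eq_square)
  finally show ?thesis by simp
next
  case True
  show ?thesis
  proof (cases "B = 0")
    case True then show ?thesis using \<open>C = 0\<close> by simp
  next
    case B: False
    define t where "t = -(A+1)/(2*B)"
    have "0 \<le> A + 2*t*B + t^2*C" using h by blast
    also have "2*t*B = -(A+1)" using B by (simp add: t_def)
    finally show ?thesis using True by simp
  qed
qed


lemma psd_sym: "psd X \<Longrightarrow> sym_mat X" by (simp add: psd_def)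
lemma psd_nonneg: "psd X \<Longrightarrow> 0 \<le> x \<bullet> (X *v x)" by (simp add: psd_def)

lemma quad_expand:
  fixes P :: "real^'n^'n"
  assumes zw: "z \<bullet> (P *v w) = w \<bullet> (P *v z)"
  shows "(w + t *\<^sub>R z) \<bullet> (P *v (w + t *\<^sub>R z)) = (w \<bullet> (P *v w)) + 2*t*(w \<bullet> (P *v z)) + t^2*(z \<bullet> (P *v z))"
proof -
  have "(w + t *\<^sub>R z) \<bullet> (P *v (w + t *\<^sub>R z)) = (w + t *\<^sub>R z) \<bullet> (P *v w + t *\<^sub>R (P *v z))"
    by (simp add: matrix_vector_right_distrib matrix_vector_mult_scaleR)
  also have "\<dots> = w \<bullet> (P *v w) + t * (w \<bullet> (P *v z)) + t * (z \<bullet> (P *v w)) + t*t*(z \<bullet> (P *v z))"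
    by (simp add: inner_add_left inner_add_right ring_distribs)
  also have "\<dots> = (w \<bullet> (P *v w)) + 2*t*(w \<bullet> (P *v z)) + t^2*(z \<bullet> (P *v z))"
    using zw by (simp add: power2_eq_square)
  finally show ?thesis .
qed

lemma psd_cs:
  assumes P: "psd (P::real^'n^'n)"
  shows "(w \<bullet> (P *v z))^2 \<le> (w \<bullet> (P *v w)) * (z \<bullet> (P *v z))"
proof -
  have s: "sym_mat P" using P psd_sym by blast
  have zw: "z \<bullet> (P *v w) = w \<bullet> (P *v z)"
    using sym_inner[OF s, of z w] by (simp add: inner_commute)
  have "\<forall>t. 0 \<le> (w \<bullet> (P *v w)) + 2*t*(w \<bullet> (P *v z)) + t^2*(z \<bullet> (P *v z))"
  proof
    fix t
    have "0 \<le> (w + t *\<^sub>R z) \<bullet> (P *v (w + t *\<^sub>R z))" using P by (rule psd_nonneg)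
    thus "0 \<le> (w \<bullet> (P *v w)) + 2*t*(w \<bullet> (P *v z)) + t^2*(z \<bullet> (P *v z))"
      using quad_expand[OF zw] by simp
  qed
  thus ?thesis using quad_cs psd_nonneg[OF P] by blast
qed

lemma psd_null:
  assumes P: "psd (P::real^'n^'n)" and z: "z \<bullet> (P *v z) = 0"
  shows "P *v z = 0"
proof -
  have "((P *v z) \<bullet> (P *v z))^2 \<le> ((P *v z) \<bullet> (P *v (P *v z))) * (z \<bullet> (P *v z))"
    by (rule psd_cs[OF P])
  with z have "(P *v z) \<bullet> (P *v z) = 0" by simp
  thus ?thesis by simp
qed



abbreviation Rg :: "real^'n^'n \<Rightarrow> (real^'n) set" where
  "Rg M \<equiv> range (\<lambda>x. M *v x)"

lemma subspace_Rg: "subspace (Rg M)"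
  using linear_subspace_image[OF matrix_vector_mul_linear[of M] subspace_UNIV] by simp

lemma range_sym:
  fixes M :: "real^'n^'n"
  assumes s: "sym_mat M" and h: "\<And>z. M *v z = 0 \<Longrightarrow> x \<bullet> z = 0"
  shows "x \<in> Rg M"
proof -
  obtain y z where y: "y \<in> span (Rg M)" and z: "\<And>w. w \<in> span (Rg M) \<Longrightarrow> orthogonal z w"
    and xyz: "x = y + z"
    using orthogonal_subspace_decomp_exists[of "Rg M" x] by blast
  have sp: "span (Rg M) = Rg M" using subspace_Rg by (rule span_eq_iff[THEN iffD2])
  have "z \<bullet> (M *v (M *v z)) = 0" using z[of "M *v (M *v z)"] sp by (auto simp: orthogonal_def)
  hence "(M *v z) \<bullet> (M *v z) = 0" using sym_inner[OF s] by simp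
  hence "M *v z = 0" by simp
  hence "x \<bullet> z = 0" by (rule h)
  moreover have "y \<bullet> z = 0" using z[OF y] by (simp add: orthogonal_def inner_commute)
  ultimately have "z \<bullet> z = 0" using xyz by (simp add: inner_add_left)
  hence "z = 0" by simp
  thus ?thesis using xyz y sp by simp
qed

lemma sym_add: "sym_mat P \<Longrightarrow> sym_mat Q \<Longrightarrow> sym_mat (P + Q)"
  unfolding sym_mat_def by (simp add: transpose_def vec_eq_iff)
lemma sym_scale: "sym_mat P \<Longrightarrow> sym_mat (c *\<^sub>R P)"
  unfolding sym_mat_def by (simp add: transpose_scalar)

lemma psd_add: "psd P \<Longrightarrow> psd Q \<Longrightarrow> psd (P + Q)"
proof -
  assume P: "psd P" and Q: "psd Q"
  have "\<And>x. 0 \<le> x \<bullet> ((P + Q) *v x)"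
  proof -
    fix x
    have "x \<bullet> ((P + Q) *v x) = x \<bullet> (P *v x) + x \<bullet> (Q *v x)"
      by (simp add: matrix_vector_mult_add_rdistrib inner_add_right)
    thus "0 \<le> x \<bullet> ((P + Q) *v x)" using psd_nonneg[OF P, of x] psd_nonneg[OF Q, of x] by linarith
  qed
  thus ?thesis using sym_add[OF psd_sym[OF P] psd_sym[OF Q]] by (simp add: psd_def)
qed

lemma psd_scale: "psd P \<Longrightarrow> 0 \<le> c \<Longrightarrow> psd (c *\<^sub>R P)"
  unfolding psd_def using sym_scale
  by (auto simp: scaleR_matrix_vector_assoc[symmetric])

lemma range_psd_add:
  fixes P Q :: "real^'n^'n"
  assumes P: "psd P" and Q: "psd Q"
  shows "Rg P \<subseteq> Rg (P + Q)"
proof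
  fix x assume "x \<in> Rg P"
  then obtain v where v: "x = P *v v" by auto
  show "x \<in> Rg (P + Q)"
  proof (rule range_sym)
    show "sym_mat (P + Q)" using P Q psd_add psd_sym by blast
  next
    fix z assume "(P + Q) *v z = 0"
    hence "z \<bullet> (P *v z) + z \<bullet> (Q *v z) = 0"
      by (metis inner_add_right inner_zero_right matrix_vector_mult_add_rdistrib)
    hence "z \<bullet> (P *v z) = 0" using psd_nonneg[OF P, of z] psd_nonneg[OF Q, of z] by linarith
    hence "P *v z = 0" using P psd_null by blast
    thus "x \<bullet> z = 0" using v sym_inner[OF psd_sym[OF P], of v z] by (simp add: inner_commute)
  qed
qed

lemma range_scale: "c \<noteq> 0 \<Longrightarrow> Rg (c *\<^sub>R (P::real^'n^'n)) = Rg P"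
proof -
  assume c: "c \<noteq> 0"
  have "Rg (c *\<^sub>R P) \<subseteq> Rg P"
  proof
    fix x assume "x \<in> Rg (c *\<^sub>R P)" then obtain v where "x = (c *\<^sub>R P) *v v" by auto
    hence "x = P *v (c *\<^sub>R v)"
      by (simp add: scaleR_matrix_vector_assoc[symmetric] matrix_vector_mult_scaleR)
    thus "x \<in> Rg P" by blast
  qed
  moreover have "Rg P \<subseteq> Rg (c *\<^sub>R P)"
  proof
    fix x assume "x \<in> Rg P" then obtain v where "x = P *v v" by auto
    hence "x = (c *\<^sub>R P) *v ((1/c) *\<^sub>R v)" using c
      by (simp add: scaleR_matrix_vector_assoc[symmetric] matrix_vector_mult_scaleR)
    thus "x \<in> Rg (c *\<^sub>R P)" by blast
  qed
  ultimately show ?thesis by blast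
qed

lemma range_comb:
  fixes P Q :: "real^'n^'n"
  assumes P: "psd P" and Q: "psd Q" and a: "0 < a" and b: "0 \<le> b"
  shows "Rg P \<subseteq> Rg (a *\<^sub>R P + b *\<^sub>R Q)"
proof -
  have "Rg P = Rg (a *\<^sub>R P)" using a range_scale by (metis less_irrefl)
  also have "\<dots> \<subseteq> Rg (a *\<^sub>R P + b *\<^sub>R Q)"
    by (rule range_psd_add) (use P Q a b psd_scale in \<open>auto intro: psd_scale\<close>)
  finally show ?thesis .
qed



lemma trip_sum: "trip C X = (\<Sum>i\<in>UNIV. \<Sum>k\<in>UNIV. C$i$k * X$k$i)"
  by (simp add: trip_def trace_def matrix_matrix_mult_def)

lemma trip_add_left: "trip (C + D) X = trip C X + trip D X"
  by (simp add: trip_sum distrib_right sum.distrib)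
lemma trip_scale_left: "trip (c *\<^sub>R C) X = c * trip C X"
  by (simp add: trip_sum sum_distrib_left mult.assoc)
lemma trip_diff_left: "trip (C - D) X = trip C X - trip D X"
  by (simp add: trip_sum left_diff_distrib sum_subtractf)
lemma trip_add_right: "trip C (X + Y) = trip C X + trip C Y"
  by (simp add: trip_sum distrib_left sum.distrib)
lemma trip_scale_right: "trip C (c *\<^sub>R X) = c * trip C X"
  by (simp add: trip_sum sum_distrib_left mult.left_commute)
lemma trip_diff_right: "trip C (X - Y) = trip C X - trip C Y"
  by (simp add: trip_sum right_diff_distrib sum_subtractf)
lemma trip_zero_right: "trip C 0 = 0"
  by (simp add: trip_sum)
lemma trip_zero_left: "trip 0 X = 0"
  by (simp add: trip_sum)

lemma trip_sum_left_gen: "finite I \<Longrightarrow> trip (sum g I) X = (\<Sum>i\<in>I. trip (g i) X)"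
  by (induct rule: finite_induct) (simp_all add: trip_zero_left trip_add_left)

lemma trip_lincomb: "trip (\<Sum>i\<in>UNIV. (c $ i) *\<^sub>R (A i :: real^'n^'n)) X = (\<Sum>i\<in>UNIV. c $ i * trip (A i) X)"
  by (simp add: trip_sum_left_gen trip_scale_left)

lemma trip_comm: "trip C X = trip X C"
  unfolding trip_def by (rule trace_mul_sym)

definition outer :: "real^'n \<Rightarrow> real^'n^'n" where
  "outer u = (\<chi> i j. u$i * u$j)"

lemma outer_mv: "outer u *v w = (u \<bullet> w) *\<^sub>R u"
proof -
  have "\<And>i. (\<Sum>j\<in>UNIV. u $ i * (u $ j * w $ j)) = (\<Sum>j\<in>UNIV. u $ j * w $ j) * u $ i"
    by (simp add: sum_distrib_left[symmetric] mult.commute)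
  thus ?thesis
    by (simp add: outer_def matrix_vector_mult_def inner_vec_def vec_eq_iff mult.assoc)
qed

lemma trip_outer: "trip S (outer u) = u \<bullet> (S *v u)"
proof -
  have "trip S (outer u) = (\<Sum>i\<in>UNIV. \<Sum>k\<in>UNIV. S$i$k * (u$k * u$i))"
    by (simp add: trip_sum outer_def)
  also have "\<dots> = (\<Sum>i\<in>UNIV. \<Sum>j\<in>UNIV. u$i * S$i$j * u$j)"
    by (simp add: mult.commute mult.left_commute)
  finally show ?thesis by (simp add: inner_mv_sum)
qed

lemma sym_outer: "sym_mat (outer u)"
  by (simp add: sym_mat_def outer_def transpose_def vec_eq_iff mult.commute)

lemma psd_outer: "psd (outer u)"
proof -
  have "\<And>x. 0 \<le> x \<bullet> (outer u *v x)"
    by (simp add: outer_mv) (metis inner_commute zero_le_square)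
  thus ?thesis using sym_outer by (simp add: psd_def)
qed

lemma trip_self_zero:
  assumes s: "sym_mat (M::real^'n^'n)" and z: "trip M M = 0"
  shows "M = 0"
proof -
  have "trip M M = (\<Sum>i\<in>UNIV. \<Sum>k\<in>UNIV. (M$i$k)^2)"
    using sym_entry[OF s] by (simp add: trip_sum power2_eq_square)
  hence "(\<Sum>i\<in>UNIV. \<Sum>k\<in>UNIV. (M$i$k)^2) = 0" using z by simp
  hence "\<forall>i\<in>UNIV. (\<Sum>k\<in>UNIV. (M$i$k)^2) = 0"
    by (subst (asm) sum_nonneg_eq_0_iff) (auto intro: sum_nonneg)
  hence "\<forall>i k. (M$i$k)^2 = 0"
    by (simp add: sum_nonneg_eq_0_iff)
  thus ?thesis by (simp add: vec_eq_iff)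
qed

lemma sym_lincomb: "(\<And>i. sym_mat (A i)) \<Longrightarrow> sym_mat (\<Sum>i\<in>I. (c $ i) *\<^sub>R (A i :: real^'n^'n))"
proof (induct I rule: infinite_finite_induct)
  case (infinite I) then show ?case by (simp add: sym_mat_def transpose_def vec_eq_iff)
next
  case empty then show ?case by (simp add: sym_mat_def transpose_def vec_eq_iff)
next
  case (insert x F) then show ?case by (simp add: sym_add sym_scale)
qed



lemma rank1_step:
  fixes X :: "real^'n^'n"
  assumes X: "psd X" and nz: "X \<noteq> 0"
  obtains u X' c where "0 < c" "u \<noteq> 0" "psd X'" "X = X' + (1/c) *\<^sub>R outer u"
    "dim (Rg X') < dim (Rg X)"
proof -
  have sX: "sym_mat X" using X by (rule psd_sym)
  obtain z where zn: "X *v z \<noteq> 0"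
    using nz matrix_eq[of X 0] by auto
  define c where "c = z \<bullet> (X *v z)"
  define u where "u = X *v z"
  have c0: "0 \<le> c" using psd_nonneg[OF X] by (simp add: c_def)
  have "c \<noteq> 0" using psd_null[OF X, of z] zn by (auto simp: c_def)
  hence cp: "0 < c" using c0 by simp
  have un: "u \<noteq> 0" using zn by (simp add: u_def)
  define X' where "X' = X + (-(1/c)) *\<^sub>R outer u"
  have X'mv: "\<And>w. X' *v w = X *v w - ((1/c) * (u \<bullet> w)) *\<^sub>R u"
  proof -
    fix w
    have "X' *v w = X *v w + (-(1/c)) *\<^sub>R (outer u *v w)"
      by (simp only: X'_def matrix_vector_mult_add_rdistrib scaleR_matrix_vector_assoc[symmetric])
    thus "X' *v w = X *v w - ((1/c) * (u \<bullet> w)) *\<^sub>R u" by (simp add: outer_mv)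
  qed
  have sX': "sym_mat X'" unfolding X'_def by (rule sym_add[OF sX sym_scale[OF sym_outer]])
  have psdX': "psd X'"
  proof -
    have "\<And>w. 0 \<le> w \<bullet> (X' *v w)"
    proof -
      fix w
      have uw0: "w \<bullet> u = w \<bullet> (X *v z)" by (simp add: u_def)
      have uw: "u \<bullet> w = w \<bullet> (X *v z)" by (simp add: u_def inner_commute)
      have cs: "(w \<bullet> (X *v z))^2 \<le> (w \<bullet> (X *v w)) * c"
        using psd_cs[OF X, of w z] by (simp add: c_def)
      have e1: "w \<bullet> (X' *v w) = w \<bullet> (X *v w) - (1/c) * (w \<bullet> (X *v z))^2"
        by (simp add: X'mv inner_diff_right uw uw0 power2_eq_square)
      have e2: "(1/c) * (w \<bullet> (X *v z))^2 \<le> w \<bullet> (X *v w)"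
        using cs cp by (simp add: divide_le_eq)
      show "0 \<le> w \<bullet> (X' *v w)" using e1 e2 by linarith
    qed
    thus ?thesis using sX' by (simp add: psd_def)
  qed
  have eq: "X = X' + (1/c) *\<^sub>R outer u" by (simp add: X'_def)
  have sub: "Rg X' \<subseteq> Rg X"
  proof
    fix x assume "x \<in> Rg X'" then obtain w where w: "x = X' *v w" by auto
    have "x = X *v (w - ((1/c) * (u \<bullet> w)) *\<^sub>R z)"
      by (simp add: w X'mv matrix_vector_mult_diff_distrib matrix_vector_mult_scaleR u_def)
    thus "x \<in> Rg X" by blast
  qed
  have uz: "u \<bullet> z = c" by (simp add: u_def c_def inner_commute)
  have X'z: "X' *v z = 0" using cp by (simp add: X'mv uz flip: u_def)
  have notin: "u \<notin> Rg X'"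
  proof
    assume "u \<in> Rg X'" then obtain w where w: "u = X' *v w" by auto
    have "z \<bullet> u = (X' *v z) \<bullet> w" using sym_inner[OF sX', of z w] w by simp
    hence "z \<bullet> u = 0" using X'z by simp
    thus False using uz cp by (simp add: inner_commute)
  qed
  have "u \<in> Rg X" by (simp add: u_def)
  hence psub: "Rg X' \<subset> Rg X" using sub notin by blast
  have "span (Rg X') = Rg X'" using subspace_Rg by (rule span_eq_iff[THEN iffD2])
  moreover have "span (Rg X) = Rg X" using subspace_Rg by (rule span_eq_iff[THEN iffD2])
  ultimately have "dim (Rg X') < dim (Rg X)" using psub dim_psubset by metis
  thus ?thesis using that cp un psdX' eq by blast
qed

lemma trip_step:
  "trip S (X' + (1/c) *\<^sub>R outer u) = trip S X' + (1/c) * (u \<bullet> (S *v u))"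
  by (simp add: trip_add_right trip_scale_right trip_outer)

lemma trip_psd_aux:
  fixes S :: "real^'n^'n"
  assumes S: "psd S"
  shows "\<forall>X. psd X \<longrightarrow> dim (Rg X) = d \<longrightarrow> 0 \<le> trip S X"
proof (induct d rule: less_induct)
  case (less d)
  show ?case
  proof (intro allI impI)
    fix X :: "real^'n^'n" assume X: "psd X" and d: "dim (Rg X) = d"
    show "0 \<le> trip S X"
    proof (cases "X = 0")
      case True then show ?thesis by (simp add: trip_zero_right)
    next
      case False
      then obtain u X' c where c: "0 < c" and "u \<noteq> 0" and X': "psd X'"
        and eq: "X = X' + (1/c) *\<^sub>R outer u" and dl: "dim (Rg X') < dim (Rg X)"
        using rank1_step[OF X] by metis
      have "0 \<le> trip S X'" using less[rule_format, OF dl[unfolded d] X'] by simp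
      moreover have "0 \<le> (1/c) * (u \<bullet> (S *v u))" using c psd_nonneg[OF S] by simp
      ultimately show ?thesis unfolding eq trip_step by simp
    qed
  qed
qed

lemma trip_psd: "psd S \<Longrightarrow> psd X \<Longrightarrow> 0 \<le> trip S X"
  using trip_psd_aux by blast

lemma pd_psd: "pd S \<Longrightarrow> psd S"
proof -
  assume S: "pd S"
  have "\<And>x. 0 \<le> x \<bullet> (S *v x)"
  proof -
    fix x show "0 \<le> x \<bullet> (S *v x)"
      using S by (cases "x = 0") (auto simp: pd_def less_imp_le)
  qed
  thus ?thesis using S by (simp add: pd_def psd_def)
qed

lemma trip_pd:
  assumes S: "pd S" and X: "psd X" and nz: "X \<noteq> 0"
  shows "0 < trip S X"
proof -
  obtain u X' c where c: "0 < c" and un: "u \<noteq> 0" and X': "psd X'"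
    and eq: "X = X' + (1/c) *\<^sub>R outer u"
    using rank1_step[OF X nz] by metis
  have "0 \<le> trip S X'" using trip_psd[OF pd_psd[OF S] X'] .
  moreover have "0 < (1/c) * (u \<bullet> (S *v u))" using c S un by (simp add: pd_def)
  ultimately show ?thesis unfolding eq trip_step by simp
qed



lemma weak_dual:
  assumes X: "primal_feas A b X" and D: "dual_feas C Cb A eps (y, S)"
  shows "b \<bullet> y \<le> trip (C + eps *\<^sub>R Cb) X"
proof -
  have eq: "C + eps *\<^sub>R Cb = (\<Sum>i\<in>UNIV. (y $ i) *\<^sub>R A i) + S" using D by (simp add: dual_feas_def)
  have "trip (C + eps *\<^sub>R Cb) X = (\<Sum>i\<in>UNIV. y $ i * trip (A i) X) + trip S X"
    unfolding eq trip_add_left trip_lincomb ..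
  also have "(\<Sum>i\<in>UNIV. y $ i * trip (A i) X) = b \<bullet> y"
    using X by (simp add: primal_feas_def inner_vec_def mult.commute)
  finally show ?thesis using trip_psd[of S X] D X by (simp add: dual_feas_def primal_feas_def)
qed

lemma convex_psd: "convex {X::real^'n^'n. psd X}"
  unfolding convex_def by (auto intro!: psd_add psd_scale)

lemma sym_diff: "sym_mat P \<Longrightarrow> sym_mat Q \<Longrightarrow> sym_mat (P - Q)"
  unfolding sym_mat_def by (simp add: transpose_def vec_eq_iff)

lemma neg_aux:
  fixes mu beta :: real
  assumes h: "\<And>w. w < 0 \<Longrightarrow> mu * w \<le> beta"
  shows "0 \<le> mu" "0 \<le> beta"
proof -
  show m: "0 \<le> mu"
  proof (rule ccontr)
    assume "\<not> 0 \<le> mu" hence m: "mu < 0" by simp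
    have "mu * ((\<bar>beta\<bar>+1)/mu) \<le> beta" using m by (intro h) (simp add: divide_pos_neg)
    thus False using m by simp
  qed
  show "0 \<le> beta"
  proof (rule ccontr)
    assume "\<not> 0 \<le> beta" hence b: "beta < 0" by simp
    have "mu * (beta/(mu+1)) \<le> beta" using b m by (intro h) (simp add: divide_neg_pos)
    hence "mu * beta \<le> beta * (mu + 1)" using m by (simp add: divide_le_eq mult.commute)
    thus False using b by (simp add: algebra_simps)
  qed
qed

lemma strong_dual:
  fixes C Cb :: "real^'n^'n" and A :: "'m::finite \<Rightarrow> real^'n^'n" and b :: "real^'m"
  assumes symC: "sym_mat C" and symCb: "sym_mat Cb" and symA: "\<And>i. sym_mat (A i)"
    and indep: "\<And>c :: real^'m. (\<Sum>i\<in>UNIV. (c $ i) *\<^sub>R A i) = 0 \<Longrightarrow> c = 0"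
    and strict_primal: "\<exists>X. pd X \<and> (\<forall>i. trip (A i) X = b $ i)"
    and Xo: "Xo \<in> Popt C Cb A b eps"
  shows "\<exists>yS. dual_feas C Cb A eps yS \<and> trip (C + eps *\<^sub>R Cb) Xo \<le> b \<bullet> fst yS"
proof -
  define Ce where "Ce = C + eps *\<^sub>R Cb"
  define v where "v = trip Ce Xo"
  define AX where "AX = (\<lambda>X. (\<chi> i. trip (A i) X) :: real^'m)"
  obtain X0 where X0: "pd X0" and X0b: "\<And>i. trip (A i) X0 = b $ i" using strict_primal by blast
  have AX0: "AX X0 = b" by (simp add: AX_def X0b vec_eq_iff)
  have Xo_f: "primal_feas A b Xo" and Xo_opt: "\<And>X. primal_feas A b X \<Longrightarrow> v \<le> trip Ce X"
    using Xo by (auto simp: Popt_def v_def Ce_def)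
  define W where "W = (\<lambda>X. (AX X - b, trip Ce X - v)) ` {X. psd X}"
  define Z where "Z = {0::real^'m} \<times> {w::real. w < 0}"
  have cZ: "convex Z" unfolding Z_def
    by (rule convex_Times[OF convex_singleton]) (use convex_halfspace_lt[of "1::real" 0] in simp)
  have AXlin: "AX (u *\<^sub>R X + w *\<^sub>R Y) = u *\<^sub>R AX X + w *\<^sub>R AX Y" for u w X Y
    by (simp add: AX_def vec_eq_iff trip_add_right trip_scale_right)
  have cW: "convex W" unfolding convex_def
  proof (intro ballI allI impI)
    fix p q :: "(real^'m) \<times> real" and u w :: real
    assume p: "p \<in> W" and q: "q \<in> W" and u: "0 \<le> u" and w: "0 \<le> w" and uw: "u + w = 1"
    obtain X where X: "psd X" and pX: "p = (AX X - b, trip Ce X - v)" using p by (auto simp: W_def)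
    obtain Y where Y: "psd Y" and qY: "q = (AX Y - b, trip Ce Y - v)" using q by (auto simp: W_def)
    have "psd (u *\<^sub>R X + w *\<^sub>R Y)" using X Y u w by (intro psd_add psd_scale)
    moreover have "u *\<^sub>R p + w *\<^sub>R q = (AX (u *\<^sub>R X + w *\<^sub>R Y) - b, trip Ce (u *\<^sub>R X + w *\<^sub>R Y) - v)"
    proof -
      have b: "b = u *\<^sub>R b + w *\<^sub>R b" using uw by (metis scaleR_add_left scaleR_one)
      have v: "v = u * v + w * v" using uw by (metis distrib_right mult_1)
      show ?thesis unfolding pX qY AXlin
        by (subst b, subst v) (simp add: trip_add_right trip_scale_right algebra_simps)
    qed
    ultimately show "u *\<^sub>R p + w *\<^sub>R q \<in> W" by (auto simp: W_def)
  qed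
  have WZ: "Z \<inter> W = {}"
  proof -
    { fix X assume X: "psd X" and "b = AX X" and "trip Ce X < v"
      hence "primal_feas A b X" by (auto simp: primal_feas_def AX_def vec_eq_iff)
      hence False using Xo_opt \<open>trip Ce X < v\<close> by fastforce }
    thus ?thesis by (auto simp: Z_def W_def) blast
  qed
  have "Z \<noteq> {}" by (auto simp: Z_def intro: exI[of _ "-1"])
  moreover have "W \<noteq> {}" by (auto simp: W_def intro: psd_outer)
  ultimately obtain a beta where an: "a \<noteq> 0" and aZ: "\<forall>x\<in>Z. inner a x \<le> beta"
      and aW: "\<forall>x\<in>W. inner a x \<ge> beta"
    using separating_hyperplane_sets[OF cZ cW _ _ WZ] by metis
  obtain lam mu where a: "a = (lam, mu)" by fastforce
  have hZ: "\<And>w. w < 0 \<Longrightarrow> mu * w \<le> beta" using aZ by (auto simp: Z_def a)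
  have mu0: "0 \<le> mu" and beta0: "0 \<le> beta" using neg_aux[OF hZ] by auto
  define M where "M = (\<Sum>i\<in>UNIV. (lam $ i) *\<^sub>R A i)"
  have lamAX: "lam \<bullet> AX X = trip M X" for X
    by (simp add: M_def trip_lincomb AX_def inner_vec_def)
  have lamb: "lam \<bullet> b = trip M X0" using lamAX[of X0] AX0 by simp
  have key: "\<And>X. psd X \<Longrightarrow> beta \<le> trip M X - trip M X0 + mu * (trip Ce X - v)"
  proof -
    fix X :: "real^'n^'n" assume "psd X"
    hence "beta \<le> inner a (AX X - b, trip Ce X - v)" using aW by (auto simp: W_def)
    thus "beta \<le> trip M X - trip M X0 + mu * (trip Ce X - v)"
      by (simp add: a inner_diff_right lamAX lamb)
  qed
  show ?thesis
  proof (cases "mu = 0")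
    case True
    have k: "\<And>X. psd X \<Longrightarrow> trip M X0 \<le> trip M X" using key beta0 True by fastforce
    have psd0: "psd (0::real^'n^'n)" using psd_scale[OF psd_outer, of 0] by simp
    have "trip M X0 \<le> 0" using k[OF psd0] by (simp add: trip_zero_right)
    moreover have "trip M X0 \<le> trip M (2 *\<^sub>R X0)" using k psd_scale[OF pd_psd[OF X0], of 2] by simp
    ultimately have t0: "trip M X0 = 0" by (simp add: trip_scale_right)
    have symM: "sym_mat M" unfolding M_def by (rule sym_lincomb[OF symA])
    have "psd M"
    proof -
      have "\<And>x. 0 \<le> x \<bullet> (M *v x)"
        using k[OF psd_outer] t0 by (simp add: trip_outer)
      thus ?thesis using symM by (simp add: psd_def)
    qed
    have "M = 0"
    proof (rule ccontr)
      assume "M \<noteq> 0"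
      hence "0 < trip X0 M" using trip_pd[OF X0 \<open>psd M\<close>] by simp
      thus False using t0 trip_comm[of M X0] by simp
    qed
    hence "lam = 0" using indep[of lam] unfolding M_def by blast
    hence "a = 0" using a True by (simp add: zero_prod_def)
    thus ?thesis using an by simp
  next
    case False
    hence mup: "0 < mu" using mu0 by simp
    define y where "y = (-(1/mu)) *\<^sub>R lam"
    define S where "S = Ce - (\<Sum>i\<in>UNIV. (y $ i) *\<^sub>R A i)"
    have tS: "trip S X = trip Ce X - (1/mu) * (- trip M X)" for X
    proof -
      have "trip S X = trip Ce X - (\<Sum>i\<in>UNIV. y $ i * trip (A i) X)"
        unfolding S_def trip_diff_left trip_lincomb ..
      also have "(\<Sum>i\<in>UNIV. y $ i * trip (A i) X) = (-(1/mu)) * (\<Sum>i\<in>UNIV. lam $ i * trip (A i) X)"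
        by (simp add: y_def sum_distrib_left)
      also have "(\<Sum>i\<in>UNIV. lam $ i * trip (A i) X) = trip M X"
        unfolding M_def trip_lincomb ..
      finally show ?thesis by simp
    qed
    have yb: "y \<bullet> b = -(1/mu) * trip M X0" by (simp add: y_def lamb)
    have key2: "\<And>X. psd X \<Longrightarrow> 0 \<le> trip S X - v + y \<bullet> b"
    proof -
      fix X :: "real^'n^'n" assume X: "psd X"
      have "beta / mu \<le> (trip M X - trip M X0 + mu * (trip Ce X - v)) / mu"
        using key[OF X] mup by (simp add: divide_right_mono)
      also have "\<dots> = trip S X - v + y \<bullet> b" using mup
        by (simp add: tS yb field_simps)
      finally show "0 \<le> trip S X - v + y \<bullet> b" using beta0 mup by (meson order.trans divide_nonneg_pos)
    qed
    have psd0: "psd (0::real^'n^'n)" using psd_scale[OF psd_outer, of 0] by simp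
    have vy: "v \<le> y \<bullet> b" using key2[OF psd0] by (simp add: trip_zero_right)
    have "\<And>x. 0 \<le> x \<bullet> (S *v x)"
    proof (rule ccontr)
      fix x :: "real^'n" assume "\<not> 0 \<le> x \<bullet> (S *v x)"
      hence n: "x \<bullet> (S *v x) < 0" by simp
      define t where "t = (y \<bullet> b - v + 1) / (-(x \<bullet> (S *v x)))"
      have tp: "0 \<le> t" using n vy unfolding t_def by (intro divide_nonneg_pos) auto
      have "0 \<le> trip S (t *\<^sub>R outer x) - v + y \<bullet> b"
        using key2 psd_scale[OF psd_outer tp] by blast
      also have "trip S (t *\<^sub>R outer x) = t * (x \<bullet> (S *v x))"
        by (simp add: trip_scale_right trip_outer)
      also have "t * (x \<bullet> (S *v x)) = -(y \<bullet> b - v + 1)" using n by (simp add: t_def)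
      finally show False by simp
    qed
    moreover have "sym_mat S" unfolding S_def Ce_def
      by (intro sym_diff sym_add sym_scale symC symCb sym_lincomb symA)
    ultimately have "psd S" by (simp add: psd_def)
    hence "dual_feas C Cb A eps (y, S)" by (simp add: dual_feas_def S_def Ce_def)
    moreover have "trip (C + eps *\<^sub>R Cb) Xo \<le> b \<bullet> fst (y, S)"
      using vy by (simp add: v_def Ce_def inner_commute)
    ultimately show ?thesis by blast
  qed
qed



lemma ri_decomp:
  fixes S :: "'a::euclidean_space set"
  assumes x: "x \<in> rel_interior S" and y: "y \<in> S"
  shows "\<exists>z\<in>S. \<exists>s>0. x = (1/(1+s)) *\<^sub>R z + (s/(1+s)) *\<^sub>R y"
proof -
  obtain e where e: "e > 0" and xS: "x \<in> S" and sub: "cball x e \<inter> affine hull S \<subseteq> S"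
    using x mem_rel_interior_cball by blast
  define s where "s = e / (norm (x - y) + 1)"
  have s0: "s > 0" using e by (simp add: s_def add_nonneg_pos)
  define z where "z = (1 + s) *\<^sub>R x + (-s) *\<^sub>R y"
  have hx: "x \<in> affine hull S" by (rule hull_inc[OF xS])
  have hy: "y \<in> affine hull S" by (rule hull_inc[OF y])
  have "z \<in> affine hull S" unfolding z_def
    by (rule mem_affine[OF affine_affine_hull hx hy]) simp
  moreover have "dist x z \<le> e"
  proof -
    have "x - z = s *\<^sub>R (y - x)" by (simp add: z_def algebra_simps)
    hence "dist x z = s * norm (x - y)" using s0 by (simp add: dist_norm norm_minus_commute)
    also have "\<dots> \<le> e"
    proof -
      have d: "0 < norm (x - y) + 1" by (simp add: add_nonneg_pos)
      have "e * norm (x - y) \<le> e * (norm (x - y) + 1)" using e by simp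
      hence "e * norm (x - y) / (norm (x - y) + 1) \<le> e" using d by (simp add: divide_le_eq)
      thus ?thesis by (simp add: s_def)
    qed
    finally show ?thesis .
  qed
  ultimately have zS: "z \<in> S" using sub by auto
  have "(1/(1+s)) *\<^sub>R z + (s/(1+s)) *\<^sub>R y = x"
  proof -
    have "(1/(1+s)) *\<^sub>R z = x + (-(s/(1+s))) *\<^sub>R y"
      using s0 by (simp add: z_def scaleR_diff_right scaleR_add_right)
    thus ?thesis by simp
  qed
  thus ?thesis using zS s0 by metis
qed



lemma ri_range:
  fixes P :: "(real^'n^'n) set"
  assumes X1: "X1 \<in> rel_interior P" and X2: "X2 \<in> rel_interior P" and ps: "\<And>X. X \<in> P \<Longrightarrow> psd X"
  shows "Rg X2 \<subseteq> Rg X1"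
proof -
  have X2P: "X2 \<in> P" using X2 rel_interior_subset by blast
  obtain Z s where Z: "Z \<in> P" and s: "s > 0" and eq: "X1 = (1/(1+s)) *\<^sub>R Z + (s/(1+s)) *\<^sub>R X2"
    using ri_decomp[OF X1 X2P] by blast
  have "Rg X2 \<subseteq> Rg ((s/(1+s)) *\<^sub>R X2 + (1/(1+s)) *\<^sub>R Z)"
    by (rule range_comb) (use ps Z X2P s in auto)
  thus ?thesis by (simp add: eq add.commute)
qed

lemma Dopt_psd: "yS \<in> Dopt C Cb A b eps \<Longrightarrow> psd (snd yS)"
  by (simp add: Dopt_def dual_feas_def)

lemma Dopt_feas: "(y, S) \<in> Dopt C Cb A b eps \<Longrightarrow> dual_feas C Cb A eps (y, S)"
  by (simp add: Dopt_def)

lemma Dopt_max: "(y, S) \<in> Dopt C Cb A b eps \<Longrightarrow> dual_feas C Cb A eps yS' \<Longrightarrow> b \<bullet> fst yS' \<le> b \<bullet> y"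
  by (cases yS') (auto simp: Dopt_def)

lemma comb_opt:
  fixes C Cb :: "real^'n^'n" and A :: "'m::finite \<Rightarrow> real^'n^'n" and b :: "real^'m"
  assumes symC: "sym_mat C" and symCb: "sym_mat Cb" and symA: "\<And>i. sym_mat (A i)"
    and indep: "\<And>c :: real^'m. (\<Sum>i\<in>UNIV. (c $ i) *\<^sub>R A i) = 0 \<Longrightarrow> c = 0"
    and strict_primal: "\<exists>X. pd X \<and> (\<forall>i. trip (A i) X = b $ i)"
    and Xa: "Xo \<in> Popt C Cb A b a" and Xc: "Xo \<in> Popt C Cb A b c" and Xe: "Xo \<in> Popt C Cb A b e"
    and Da: "(ya, Sa) \<in> Dopt C Cb A b a" and Dc: "(yc, Sc) \<in> Dopt C Cb A b c"
    and t0: "0 \<le> t" and t1: "t \<le> 1" and e: "e = t * a + (1 - t) * c"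
  shows "(t *\<^sub>R ya + (1-t) *\<^sub>R yc, t *\<^sub>R Sa + (1-t) *\<^sub>R Sc) \<in> Dopt C Cb A b e"
proof -
  define v where "v = (\<lambda>eps. trip (C + eps *\<^sub>R Cb) Xo)"
  have vlin: "\<And>eps. v eps = trip C Xo + eps * trip Cb Xo"
    by (simp add: v_def trip_add_left trip_scale_left)
  obtain yS1 where f1: "dual_feas C Cb A a yS1" and g1: "v a \<le> b \<bullet> fst yS1"
    using strong_dual[OF symC symCb symA indep strict_primal Xa] v_def by blast
  obtain yS2 where f2: "dual_feas C Cb A c yS2" and g2: "v c \<le> b \<bullet> fst yS2"
    using strong_dual[OF symC symCb symA indep strict_primal Xc] v_def by blast
  have ga: "v a \<le> b \<bullet> ya" using g1 Dopt_max[OF Da f1] by linarith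
  have gc: "v c \<le> b \<bullet> yc" using g2 Dopt_max[OF Dc f2] by linarith
  have fa: "(\<Sum>i\<in>UNIV. (ya $ i) *\<^sub>R A i) + Sa = C + a *\<^sub>R Cb" and pa: "psd Sa"
    using Dopt_feas[OF Da] by (auto simp: dual_feas_def)
  have fc: "(\<Sum>i\<in>UNIV. (yc $ i) *\<^sub>R A i) + Sc = C + c *\<^sub>R Cb" and pc: "psd Sc"
    using Dopt_feas[OF Dc] by (auto simp: dual_feas_def)
  define y where "y = t *\<^sub>R ya + (1-t) *\<^sub>R yc"
  define S where "S = t *\<^sub>R Sa + (1-t) *\<^sub>R Sc"
  have sumeq: "(\<Sum>i\<in>UNIV. (y $ i) *\<^sub>R A i) = t *\<^sub>R (\<Sum>i\<in>UNIV. (ya $ i) *\<^sub>R A i) + (1-t) *\<^sub>R (\<Sum>i\<in>UNIV. (yc $ i) *\<^sub>R A i)"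
    by (simp add: y_def scaleR_add_left sum.distrib scaleR_sum_right)
  have "(\<Sum>i\<in>UNIV. (y $ i) *\<^sub>R A i) + S = t *\<^sub>R ((\<Sum>i\<in>UNIV. (ya $ i) *\<^sub>R A i) + Sa) + (1-t) *\<^sub>R ((\<Sum>i\<in>UNIV. (yc $ i) *\<^sub>R A i) + Sc)"
    unfolding sumeq S_def by (simp add: scaleR_add_right algebra_simps)
  also have "\<dots> = t *\<^sub>R (C + a *\<^sub>R Cb) + (1-t) *\<^sub>R (C + c *\<^sub>R Cb)" unfolding fa fc ..
  also have "\<dots> = C + e *\<^sub>R Cb" unfolding e by (simp add: algebra_simps)
  finally have feq: "(\<Sum>i\<in>UNIV. (y $ i) *\<^sub>R A i) + S = C + e *\<^sub>R Cb" .
  have "psd S" unfolding S_def using pa pc t0 t1 by (intro psd_add psd_scale) auto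
  hence feas: "dual_feas C Cb A e (y, S)" using feq by (simp add: dual_feas_def)
  have Xof: "primal_feas A b Xo" using Xe by (simp add: Popt_def)
  have "\<And>yS'. dual_feas C Cb A e yS' \<Longrightarrow> b \<bullet> fst yS' \<le> b \<bullet> y"
  proof -
    fix yS' assume d: "dual_feas C Cb A e yS'"
    obtain y' S' where yS': "yS' = (y', S')" by fastforce
    have "b \<bullet> y' \<le> v e" using weak_dual[OF Xof d[unfolded yS']] by (simp add: v_def)
    also have "v e = t * v a + (1 - t) * v c" unfolding vlin e by (simp add: algebra_simps)
    also have "\<dots> \<le> t * (b \<bullet> ya) + (1 - t) * (b \<bullet> yc)"
      using ga gc t0 t1 by (intro add_mono mult_left_mono) auto
    also have "\<dots> = b \<bullet> y" by (simp add: y_def inner_add_right)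
    finally show "b \<bullet> fst yS' \<le> b \<bullet> y" using yS' by simp
  qed
  hence "\<forall>yS'. dual_feas C Cb A e yS' \<longrightarrow> b \<bullet> fst yS' \<le> b \<bullet> fst (y, S)" by simp
  thus ?thesis using feas unfolding Dopt_def y_def S_def by blast
qed



lemma Rg_eq_dim:
  fixes S T :: "real^'n^'n"
  assumes "Rg S \<subseteq> Rg T" and "rank S = rank T"
  shows "Rg S = Rg T"
  using subspace_dim_equal[OF subspace_Rg subspace_Rg assms(1)] assms(2)
  by (simp add: rank_dim_range)

theorem proposition4:
  fixes C Cb :: "real^'n^'n" and A :: "'m::finite \<Rightarrow> real^'n^'n" and b :: "real^'m"
    and eps1 eps2 :: real
    and Xs :: "real \<Rightarrow> real^'n^'n" and ys :: "real \<Rightarrow> real^'m" and Ss :: "real \<Rightarrow> real^'n^'n"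
  assumes symC: "sym_mat C" and symCb: "sym_mat Cb" and symA: "\<And>i. sym_mat (A i)"
    and indep: "\<And>c :: real^'m. (\<Sum>i\<in>UNIV. (c $ i) *\<^sub>R A i) = 0 \<Longrightarrow> c = 0"
    and strict_primal: "\<exists>X. pd X \<and> (\<forall>i. trip (A i) X = b $ i)"
    and strict_dual: "\<exists>y S. pd S \<and> (\<Sum>i\<in>UNIV. (y $ i) *\<^sub>R A i) + S = C"
    and lt: "eps1 < eps2"
    and sub: "{eps1..eps2} \<subseteq> interior (Eset C Cb A b)"
    and mc: "\<And>eps. eps \<in> {eps1..eps2} \<Longrightarrow> max_compl C Cb A b eps (Xs eps) (ys eps) (Ss eps)"
    and Pconst: "\<And>eps. eps \<in> {eps1..eps2} \<Longrightarrow> Popt C Cb A b eps = Popt C Cb A b eps1"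
    and rkconst: "\<And>eps. eps \<in> {eps1..eps2} \<Longrightarrow> rank (Ss eps) = rank (Ss eps1)"
  shows "\<forall>eps\<in>{eps1..eps2}. opt_partition (Xs eps) (Ss eps) = opt_partition (Xs eps1) (Ss eps1)"
proof -
  define a where "a = eps1"
  define c where "c = eps2"
  have ac: "a < c" using lt by (simp add: a_def c_def)
  have aI: "a \<in> {eps1..eps2}" and cI: "c \<in> {eps1..eps2}" using lt by (auto simp: a_def c_def)
  let ?P = "Popt C Cb A b eps1"
  have riX: "\<And>e. e \<in> {eps1..eps2} \<Longrightarrow> Xs e \<in> rel_interior ?P"
    using mc Pconst unfolding max_compl_def by metis
  have psdP: "\<And>X. X \<in> ?P \<Longrightarrow> psd X" by (simp add: Popt_def primal_feas_def)
  have XR: "\<And>e. e \<in> {eps1..eps2} \<Longrightarrow> Rg (Xs e) = Rg (Xs eps1)"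
  proof -
    fix e assume e: "e \<in> {eps1..eps2}"
    show "Rg (Xs e) = Rg (Xs eps1)"
      using ri_range[OF riX[OF e] riX[OF aI[unfolded a_def]] psdP]
        ri_range[OF riX[OF aI[unfolded a_def]] riX[OF e] psdP] by blast
  qed
  define Xo where "Xo = Xs eps1"
  have XoP: "\<And>e. e \<in> {eps1..eps2} \<Longrightarrow> Xo \<in> Popt C Cb A b e"
    using riX[OF aI[unfolded a_def]] rel_interior_subset Pconst unfolding Xo_def by blast
  have riD: "\<And>e. e \<in> {eps1..eps2} \<Longrightarrow> (ys e, Ss e) \<in> rel_interior (Dopt C Cb A b e)"
    using mc by (simp add: max_compl_def)
  have inD: "\<And>e. e \<in> {eps1..eps2} \<Longrightarrow> (ys e, Ss e) \<in> Dopt C Cb A b e"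
    using riD rel_interior_subset by blast
  have mid: "\<And>e. a < e \<Longrightarrow> e < c \<Longrightarrow> Rg (Ss e) = Rg (Ss a) \<and> Rg (Ss c) = Rg (Ss e)"
  proof -
    fix e assume ae: "a < e" and ec: "e < c"
    have eI: "e \<in> {eps1..eps2}" using ae ec by (simp add: a_def c_def)
    define t where "t = (c - e) / (c - a)"
    have tp: "0 < t" using ec ac by (simp add: t_def)
    have t1: "t < 1" using ae ac by (simp add: t_def divide_less_eq)
    have eeq: "e = t * a + (1 - t) * c"
    proof -
      have "t * (c - a) = c - e" using ac by (simp add: t_def)
      thus ?thesis by (simp add: algebra_simps)
    qed
    define Sc where "Sc = t *\<^sub>R Ss a + (1-t) *\<^sub>R Ss c"
    have Zc: "(t *\<^sub>R ys a + (1-t) *\<^sub>R ys c, Sc) \<in> Dopt C Cb A b e"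
      unfolding Sc_def
      by (rule comb_opt[OF symC symCb symA indep strict_primal XoP[OF aI] XoP[OF cI] XoP[OF eI]
            inD[OF aI] inD[OF cI]]) (use tp t1 eeq in auto)
    obtain W s where W: "W \<in> Dopt C Cb A b e" and s: "s > 0"
      and eq: "(ys e, Ss e) = (1/(1+s)) *\<^sub>R W + (s/(1+s)) *\<^sub>R (t *\<^sub>R ys a + (1-t) *\<^sub>R ys c, Sc)"
      using ri_decomp[OF riD[OF eI] Zc] by blast
    have Seq: "Ss e = (1/(1+s)) *\<^sub>R snd W + (s/(1+s)) *\<^sub>R Sc"
      using arg_cong[OF eq, of snd] by simp
    have pa: "psd (Ss a)" using Dopt_psd[OF inD[OF aI]] by simp
    have pc: "psd (Ss c)" using Dopt_psd[OF inD[OF cI]] by simp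
    have pSc: "psd Sc" unfolding Sc_def using pa pc tp t1 by (intro psd_add psd_scale) auto
    have pW: "psd (snd W)" using Dopt_psd[OF W] .
    have "Rg Sc \<subseteq> Rg ((s/(1+s)) *\<^sub>R Sc + (1/(1+s)) *\<^sub>R snd W)"
      by (rule range_comb) (use pSc pW s in auto)
    hence r1: "Rg Sc \<subseteq> Rg (Ss e)" by (simp add: Seq add.commute)
    have "Rg (Ss a) \<subseteq> Rg Sc" unfolding Sc_def
      by (rule range_comb) (use pa pc tp t1 in auto)
    hence ra: "Rg (Ss a) \<subseteq> Rg (Ss e)" using r1 by blast
    have "Rg (Ss c) \<subseteq> Rg ((1-t) *\<^sub>R Ss c + t *\<^sub>R Ss a)"
      by (rule range_comb) (use pa pc tp t1 in auto)
    hence rc: "Rg (Ss c) \<subseteq> Rg (Ss e)" using r1 by (simp add: Sc_def add.commute)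
    have rke: "rank (Ss e) = rank (Ss a)" using rkconst[OF eI] by (simp add: a_def)
    have rkc: "rank (Ss c) = rank (Ss a)" using rkconst[OF cI] by (simp add: a_def)
    show "Rg (Ss e) = Rg (Ss a) \<and> Rg (Ss c) = Rg (Ss e)"
      using Rg_eq_dim[OF ra] Rg_eq_dim[OF rc] rke rkc by simp
  qed
  have SR: "\<And>e. e \<in> {eps1..eps2} \<Longrightarrow> Rg (Ss e) = Rg (Ss eps1)"
  proof -
    fix e assume e: "e \<in> {eps1..eps2}"
    define m where "m = (a + c) / 2"
    have am: "a < m" and mc': "m < c" using ac by (auto simp: m_def)
    have m1: "Rg (Ss m) = Rg (Ss a)" and m2: "Rg (Ss c) = Rg (Ss m)" using mid[OF am mc'] by auto
    have "e = a \<or> e = c \<or> (a < e \<and> e < c)" using e by (auto simp: a_def c_def)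
    moreover
    { assume "e = a" hence "Rg (Ss e) = Rg (Ss eps1)" by (simp add: a_def) }
    moreover
    { assume "e = c" hence "Rg (Ss e) = Rg (Ss eps1)" using m1 m2 by (simp add: a_def) }
    moreover
    { assume "a < e \<and> e < c" hence "Rg (Ss e) = Rg (Ss eps1)" using mid[of e] by (simp add: a_def) }
    ultimately show "Rg (Ss e) = Rg (Ss eps1)" by blast
  qed
  show ?thesis
  proof
    fix e assume e: "e \<in> {eps1..eps2}"
    show "opt_partition (Xs e) (Ss e) = opt_partition (Xs eps1) (Ss eps1)"
      unfolding opt_partition_def using XR[OF e] SR[OF e] by simp
  qed
qed

end
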